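(* Let $n \ge 2$ be an integer, $\alpha,\beta\in\mathbb{R}$ with $\beta>0$ and $\alpha^2 < n\beta$, and let $\mathbb{M}_{\alpha,\beta} := \{M \in \mathbb{R}^{n\times n} : s(M) = n\alpha,\ q(M) = n\beta\}$. Let $M \in \mathbb{M}_{\alpha,\beta}$ be a matrix whose determinant is maximal among all elements of $\mathbb{M}_{\alpha,\beta}$ (such a matrix exists by compactness). Then: If $\alpha^2 \le \beta$: (A) $MM^T = \beta I$, and (B) $\det M = \beta^{n/2}$. If $\alpha^2 \ge \beta$: (C) every row sum and every column sum of $M$ equals $\alpha$; (D) $MM^T = (\beta-\delta)I + \delta J$, where $\delta := \frac{\alpha^2-\beta}{n-1}$ (so $\beta - \delta = \frac{n\beta-\alpha^2}{n-1}$); and (E) $\det M = |\alpha|(\beta-\delta)^{\frac{n-1}{2}}$.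
   Context: For a real matrix $M$, $s(M)$ denotes the sum of all entries of $M$ and $q(M)$ the sum of the squares of all entries of $M$. $I$ is the $n\times n$ identity matrix and $J$ is the $n\times n$ matrix with all entries equal to $1$. *)

theory Defs
  imports "HOL-Analysis.Analysis"
begin

definition msum :: "real^'n^'n \<Rightarrow> real" where
  "msum M = (\<Sum>i\<in>UNIV. \<Sum>j\<in>UNIV. M $ i $ j)"

definition msq :: "real^'n^'n \<Rightarrow> real" where
  "msq M = (\<Sum>i\<in>UNIV. \<Sum>j\<in>UNIV. (M $ i $ j)^2)"

definition onesJ :: "real^'n^'n" where
  "onesJ = (\<chi> i j. 1)"

definition Mset :: "real \<Rightarrow> real \<Rightarrow> (real^'n^'n) set" where
  "Mset \<alpha> \<beta> = {M. msum M = real CARD('n) * \<alpha> \<and> msq M = real CARD('n) * \<beta>}"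

end

theory Submission
  imports Defs
begin

definition rep :: "real^'n^'n \<Rightarrow> 'n \<Rightarrow> real^'n \<Rightarrow> real^'n^'n" where
  "rep A i x = (\<chi> k. if k = i then x else A$k)"

definition cofm :: "real^'n^'n \<Rightarrow> real^'n^'n" where
  "cofm A = (\<chi> i j. det (rep A i (axis j 1)))"

definition LL :: "real^'n^'n \<Rightarrow> real^'n^'n \<Rightarrow> real" where
  "LL A X = (\<Sum>i\<in>UNIV. det (rep A i (X$i)))"

lemma det_rep_add: "det (rep A i (x + y)) = det (rep A i x) + det (rep A i y)"
  unfolding rep_def using det_row_add[of i "\<lambda>_. x" "\<lambda>_. y" "\<lambda>k. A$k"] by simp

lemma det_rep_mul: "det (rep A i (c *\<^sub>R x)) = c * det (rep A i x)"
  unfolding rep_def using det_row_mul[of i c "\<lambda>_. x" "\<lambda>k. A$k"] by (simp only: scalar_mult_eq_scaleR)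

lemma det_rep_sum: "finite S \<Longrightarrow> det (rep A i (\<Sum>j\<in>S. f j)) = (\<Sum>j\<in>S. det (rep A i (f j)))"
proof (induction S rule: finite_induct)
  case empty
  then show ?case using det_rep_mul[of A i 0 0] by simp
next
  case (insert x F)
  then show ?case by (simp add: det_rep_add)
qed

lemma det_rep_lin: "det (rep A i x) = (\<Sum>j\<in>UNIV. x$j * det (rep A i (axis j 1)))"
proof -
  have "x = (\<Sum>j\<in>UNIV. x$j *\<^sub>R axis j 1)"
    using basis_expansion[of x] by (simp add: scalar_mult_eq_scaleR)
  then have "det (rep A i x) = det (rep A i (\<Sum>j\<in>UNIV. x$j *\<^sub>R axis j 1))" by simp
  also have "\<dots> = (\<Sum>j\<in>UNIV. x$j * det (rep A i (axis j 1)))"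
    by (simp add: det_rep_sum det_rep_mul)
  finally show ?thesis .
qed

lemma LL_inner: "LL A X = inner (cofm A) X"
  unfolding LL_def inner_vec_def cofm_def
  by (subst det_rep_lin) (simp add: mult.commute)

lemma rep_self: "rep A i (A$i) = A"
  unfolding rep_def by (simp add: vec_eq_iff)

lemma det_rep_row: "det (rep A i (A$k)) = (if k = i then det A else 0)"
proof (cases "k = i")
  case True then show ?thesis by (simp add: rep_self)
next
  case False
  show ?thesis using False
    by (auto intro!: det_identical_rows[of i k] simp: rep_def row_def vec_eq_iff)
qed

lemma cofm_mul: "cofm A ** transpose A = det A *\<^sub>R mat 1"
proof -
  have "(cofm A ** transpose A) $ i $ k = det (rep A i (A$k))" for i k
    using det_rep_lin[of A i "A$k"]
    by (simp add: matrix_matrix_mult_def cofm_def transpose_def mult.commute)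
  then show ?thesis by (simp add: vec_eq_iff det_rep_row mat_def)
qed

lemma LL_self: "LL A A = real CARD('n) * det (A::real^'n^'n)"
  unfolding LL_def rep_self by simp


lemma prod_rep: "(\<Prod>k\<in>UNIV. rep A i x $ k $ p k) = x $ p i * (\<Prod>k\<in>UNIV-{i}. A $ k $ p k)"
proof -
  have "(\<Prod>k\<in>UNIV. rep A i x $ k $ p k) = rep A i x $ i $ p i * (\<Prod>k\<in>UNIV-{i}. rep A i x $ k $ p k)"
    by (simp add: prod.remove)
  also have "(\<Prod>k\<in>UNIV-{i}. rep A i x $ k $ p k) = (\<Prod>k\<in>UNIV-{i}. A $ k $ p k)"
    by (rule prod.cong) (auto simp: rep_def)
  finally show ?thesis by (simp add: rep_def)
qed

lemma det_deriv:
  fixes \<gamma> :: "real \<Rightarrow> real^'n^'n"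
  assumes "\<And>i j. ((\<lambda>t. \<gamma> t $ i $ j) has_real_derivative X $ i $ j) (at 0)"
  shows "((\<lambda>t. det (\<gamma> t)) has_real_derivative LL (\<gamma> 0) X) (at 0)"
proof -
  have d: "((\<lambda>t. of_int (sign p) * (\<Prod>i\<in>UNIV. \<gamma> t $ i $ p i)) has_real_derivative
      of_int (sign p) * (\<Sum>i\<in>UNIV. X $ i $ p i * (\<Prod>k\<in>UNIV-{i}. \<gamma> 0 $ k $ p k))) (at 0)" for p
    by (intro DERIV_cmult has_field_derivative_prod assms)
  have "((\<lambda>t. det (\<gamma> t)) has_real_derivative (\<Sum>p\<in>{p. p permutes UNIV}. of_int (sign p) * (\<Sum>i\<in>UNIV. X $ i $ p i * (\<Prod>k\<in>UNIV-{i}. \<gamma> 0 $ k $ p k)))) (at 0)"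
    unfolding det_def by (intro DERIV_sum d)
  moreover have "(\<Sum>p\<in>{p. p permutes UNIV}. of_int (sign p) * (\<Sum>i\<in>UNIV. X $ i $ p i * (\<Prod>k\<in>UNIV-{i}. \<gamma> 0 $ k $ p k))) = LL (\<gamma> 0) X"
    unfolding LL_def det_def prod_rep sum_distrib_left
    by (subst sum.swap) simp
  ultimately show ?thesis by simp
qed


lemma inner_mat: "inner (A::real^'n^'n) B = (\<Sum>i\<in>UNIV. \<Sum>j\<in>UNIV. A$i$j * B$i$j)"
  by (simp add: inner_vec_def)

lemma msum_inner: "msum M = inner M onesJ"
  by (simp add: msum_def inner_mat onesJ_def)

lemma msq_inner: "msq M = inner M M"
  by (simp add: msq_def inner_mat power2_eq_square)

lemma inner_J_J: "inner (onesJ::real^'n^'n) onesJ = real CARD('n) ^ 2"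
  by (simp add: inner_mat onesJ_def power2_eq_square)

lemma first_order:
  fixes M :: "real^'n^'n"
  assumes ab: "\<alpha>^2 < real CARD('n) * \<beta>"
    and Min: "M \<in> Mset \<alpha> \<beta>"
    and Mmax: "\<forall>N::real^'n^'n \<in> Mset \<alpha> \<beta>. det N \<le> det M"
    and XJ: "inner X onesJ = 0" and XM: "inner X M = 0"
  shows "LL M X = 0"
proof (cases "X = 0")
  case True
  then show ?thesis by (simp add: LL_inner)
next
  case False
  define n where "n = real CARD('n)"
  have npos: "n > 0" unfolding n_def by simp
  define C :: "real^'n^'n" where "C = (\<alpha> / n) *\<^sub>R onesJ"
  define M0 where "M0 = M - C"
  have sM: "inner M onesJ = n * \<alpha>" and qM: "inner M M = n * \<beta>"
    using Min by (auto simp: Mset_def msum_inner msq_inner n_def)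
  have JJ: "inner (onesJ::real^'n^'n) onesJ = n^2" using inner_J_J n_def by simp
  have M0J: "inner M0 onesJ = 0"
    using npos by (simp add: M0_def C_def inner_diff_left sM JJ power2_eq_square)
  define r where "r = n * \<beta> - \<alpha>^2"
  have rpos: "r > 0" using ab r_def n_def by simp
  have M0M0: "inner M0 M0 = r"
    using npos by (simp add: M0_def C_def inner_diff_left inner_diff_right sM qM JJ
        inner_commute[of onesJ M] r_def power2_eq_square field_simps)
  define Y where "Y = (sqrt r / norm X) *\<^sub>R X"
  have nX: "norm X > 0" using False by simp
  have YY: "inner Y Y = r"
    using nX rpos by (simp add: Y_def power2_eq_square[symmetric] dot_square_norm)
  have YJ: "inner Y onesJ = 0" by (simp add: Y_def XJ)
  have XM0: "inner X M0 = 0" by (simp add: M0_def C_def inner_diff_right XM XJ)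
  have YM0: "inner Y M0 = 0" by (simp add: Y_def XM0)
  have CC: "inner C C = \<alpha>^2" using npos by (simp add: C_def JJ power2_eq_square)
  define \<gamma> where "\<gamma> t = C + cos t *\<^sub>R M0 + sin t *\<^sub>R Y" for t
  have g0: "\<gamma> 0 = M" by (simp add: \<gamma>_def M0_def)
  have gin: "\<gamma> t \<in> Mset \<alpha> \<beta>" for t
  proof -
    have "inner (\<gamma> t) onesJ = n * \<alpha>"
      using npos by (simp add: \<gamma>_def inner_add_left M0J YJ C_def JJ power2_eq_square)
    moreover have "inner (\<gamma> t) (\<gamma> t) = n * \<beta>"
    proof -
      have CM0: "inner C M0 = 0" by (simp add: C_def inner_commute[of onesJ] M0J)
      have CY: "inner C Y = 0" by (simp add: C_def inner_commute[of onesJ] YJ)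
      have "inner (\<gamma> t) (\<gamma> t) = inner C C + (cos t)^2 * inner M0 M0 + (sin t)^2 * inner Y Y
          + 2 * cos t * inner C M0 + 2 * sin t * inner C Y + 2 * cos t * sin t * inner Y M0"
        by (simp add: \<gamma>_def inner_add_left inner_add_right inner_commute[of M0 C]
            inner_commute[of Y C] inner_commute[of M0 Y] power2_eq_square algebra_simps)
      also have "\<dots> = \<alpha>^2 + ((cos t)^2 + (sin t)^2) * r"
        by (simp add: CC M0M0 YY CM0 CY YM0 flip: distrib_right)
      also have "\<dots> = n * \<beta>" by (simp add: r_def sin_cos_squared_add add.commute)
      finally show ?thesis .
    qed
    ultimately show ?thesis by (simp add: Mset_def msum_inner msq_inner n_def)
  qed
  have der: "((\<lambda>t. det (\<gamma> t)) has_real_derivative LL (\<gamma> 0) Y) (at 0)"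
  proof (rule det_deriv)
    fix i j
    show "((\<lambda>t. \<gamma> t $ i $ j) has_real_derivative Y $ i $ j) (at 0)"
      unfolding \<gamma>_def by (auto intro!: derivative_eq_intros)
  qed
  have "LL M Y = 0"
    using DERIV_local_max[OF der[unfolded g0], of 1] Mmax gin g0 by auto
  then show ?thesis
    using nX rpos by (simp add: LL_inner Y_def)
qed


lemma det_IJ:
  assumes n2: "CARD('n) \<ge> 2"
  shows "det (p *\<^sub>R mat 1 + q *\<^sub>R (onesJ::real^'n^'n)) = p^(CARD('n)-1) * (p + real CARD('n) * q)"
proof -
  define n where "n = real CARD('n)"
  have npos: "n > 0" unfolding n_def by simp
  define v1 :: "real^'n" where "v1 = (\<chi> i. 1)"
  define u where "u = (1 / sqrt n) *\<^sub>R v1"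
  have "inner u u = 1"
    using npos by (simp add: u_def v1_def inner_vec_def n_def)
  then have nu: "norm u = 1" by (simp add: norm_eq_sqrt_inner)
  obtain k :: 'n where True by simp
  obtain R where rot: "rotation_matrix R" and Re: "R *v axis k 1 = u"
    using rotation_matrix_exists_basis[OF n2 nu] by metis
  have RR: "transpose R ** R = mat 1" and RR': "R ** transpose R = mat 1" and dR: "det R = 1"
    using rot by (auto simp: rotation_matrix_def orthogonal_matrix_def)
  have Ru: "transpose R *v u = axis k 1"
    by (metis Re RR matrix_vector_mul_assoc matrix_vector_mul_lid)
  define c where "c i = (\<Sum>l\<in>UNIV. R$l$i)" for i
  have c: "c i = (if i = k then sqrt n else 0)" for i
  proof -
    have "v1 = sqrt n *\<^sub>R u" using npos by (simp add: u_def)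
    then have "transpose R *v v1 = sqrt n *\<^sub>R (transpose R *v u)"
      by (simp only: matrix_vector_mult_scaleR)
    then have "transpose R *v v1 = sqrt n *\<^sub>R axis k 1"
      by (simp only: Ru)
    then have "(transpose R *v v1) $ i = (if i = k then sqrt n else 0)"
      by (simp add: axis_def)
    then show ?thesis
      by (simp add: c_def matrix_vector_mult_def transpose_def v1_def)
  qed
  define X where "X = p *\<^sub>R mat 1 + q *\<^sub>R (onesJ::real^'n^'n)"
  have Xe: "X$a$b = p * (if a = b then 1 else 0) + q" for a b
    by (simp add: X_def mat_def onesJ_def)
  have inner_s: "(\<Sum>a\<in>UNIV. R$a$i * X$a$l) = p * R$l$i + q * c i" for i l
  proof -
    have "(\<Sum>a\<in>UNIV. R$a$i * X$a$l) = (\<Sum>a\<in>UNIV. p * (if a = l then R$a$i else 0) + q * R$a$i)"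
      by (rule sum.cong) (auto simp: Xe algebra_simps)
    also have "\<dots> = p * R$l$i + q * c i"
      by (simp add: sum.distrib sum_distrib_left[symmetric] c_def)
    finally show ?thesis .
  qed
  have entry: "(transpose R ** X ** R)$i$j = p * (transpose R ** R)$i$j + q * (c i * c j)" for i j
  proof -
    have "(transpose R ** X ** R)$i$j = (\<Sum>l\<in>UNIV. (\<Sum>a\<in>UNIV. R$a$i * X$a$l) * R$l$j)"
      by (simp add: matrix_matrix_mult_def transpose_def)
    also have "\<dots> = (\<Sum>l\<in>UNIV. (p * R$l$i + q * c i) * R$l$j)"
      by (simp add: inner_s)
    also have "\<dots> = p * (\<Sum>l\<in>UNIV. R$l$i * R$l$j) + q * (c i * c j)"
      by (simp add: algebra_simps sum.distrib sum_distrib_left c_def)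
    also have "(\<Sum>l\<in>UNIV. R$l$i * R$l$j) = (transpose R ** R)$i$j"
      by (simp add: matrix_matrix_mult_def transpose_def)
    finally show ?thesis .
  qed
  have D: "transpose R ** X ** R = (\<chi> i j. if i = j then (if i = k then p + q * n else p) else 0)"
    using npos by (simp add: vec_eq_iff entry RR mat_def c)
  have "det (transpose R ** X ** R) = det X"
    by (simp add: det_mul dR)
  also have "det (transpose R ** X ** R) = (\<Prod>i\<in>UNIV. if i = k then p + q * n else p)"
    unfolding D by (subst det_diagonal) auto
  also have "\<dots> = (p + q * n) * (\<Prod>i\<in>UNIV-{k}. p)"
  proof -
    have "(\<Prod>i\<in>UNIV. if i = k then p + q * n else p) = (p + q * n) * (\<Prod>i\<in>UNIV-{k}. if i = k then p + q * n else p)"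
      by (simp add: prod.remove[of UNIV k])
    also have "(\<Prod>i\<in>UNIV-{k}. if i = k then p + q * n else p) = (\<Prod>i\<in>UNIV-{k}. p)"
      by (rule prod.cong) auto
    finally show ?thesis .
  qed
  also have "\<dots> = p^(CARD('n)-1) * (p + n * q)"
    by (simp add: card_Diff_singleton mult.commute)
  finally show ?thesis unfolding X_def n_def by simp
qed


lemma cof_comb:
  fixes M :: "real^'n^'n"
  assumes ab: "\<alpha>^2 < real CARD('n) * \<beta>"
    and Min: "M \<in> Mset \<alpha> \<beta>"
    and Mmax: "\<forall>N::real^'n^'n \<in> Mset \<alpha> \<beta>. det N \<le> det M"
  shows "\<exists>a b. cofm M = a *\<^sub>R onesJ + b *\<^sub>R M"
proof -
  define n where "n = real CARD('n)"
  have npos: "n > 0" unfolding n_def by simp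
  define C :: "real^'n^'n" where "C = (\<alpha> / n) *\<^sub>R onesJ"
  define M0 where "M0 = M - C"
  have sM: "inner M onesJ = n * \<alpha>" and qM: "inner M M = n * \<beta>"
    using Min by (auto simp: Mset_def msum_inner msq_inner n_def)
  have JJ: "inner (onesJ::real^'n^'n) onesJ = n^2" using inner_J_J n_def by simp
  have M0J: "inner M0 onesJ = 0"
    using npos by (simp add: M0_def C_def inner_diff_left sM JJ power2_eq_square)
  define r where "r = n * \<beta> - \<alpha>^2"
  have rpos: "r > 0" using ab r_def n_def by simp
  have M0M0: "inner M0 M0 = r"
    using npos by (simp add: M0_def C_def inner_diff_left inner_diff_right sM qM JJ
        inner_commute[of onesJ M] r_def power2_eq_square field_simps)
  define Cf where "Cf = cofm M"
  define a' where "a' = inner Cf onesJ / n^2"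
  define b where "b = inner Cf M0 / r"
  define Z where "Z = Cf - a' *\<^sub>R onesJ - b *\<^sub>R M0"
  have ZJ: "inner Z onesJ = 0"
    using npos by (simp add: Z_def inner_diff_left JJ M0J a'_def)
  have ZM0: "inner Z M0 = 0"
    using rpos by (simp add: Z_def inner_diff_left M0M0 inner_commute[of onesJ M0] M0J b_def)
  have ZM: "inner Z M = 0"
  proof -
    have "M = M0 + C" by (simp add: M0_def)
    then show ?thesis by (simp add: inner_add_right ZM0 C_def ZJ)
  qed
  have "LL M Z = 0" by (rule first_order[OF ab Min Mmax ZJ ZM])
  then have CZ: "inner Cf Z = 0" by (simp add: LL_inner Cf_def)
  have "inner Z Z = inner Cf Z - a' * inner onesJ Z - b * inner M0 Z"
    by (simp add: Z_def inner_diff_left)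
  also have "\<dots> = 0" by (simp add: CZ inner_commute[of onesJ Z] ZJ inner_commute[of M0 Z] ZM0)
  finally have "Z = 0" by simp
  then have "Cf = (a' - b * \<alpha> / n) *\<^sub>R onesJ + b *\<^sub>R M"
    by (simp add: Z_def M0_def C_def algebra_simps)
  then show ?thesis unfolding Cf_def by blast
qed


lemma det_scale: "det (c *\<^sub>R (A::real^'n^'n)) = c ^ CARD('n) * det A"
  by (simp add: det_def prod.distrib sum_distrib_left mult_ac)

lemma mult_scaleR_left: "(c *\<^sub>R (A::real^'n^'n)) ** B = c *\<^sub>R (A ** B)"
  by (simp add: matrix_matrix_mult_def vec_eq_iff sum_distrib_left mult_ac)

lemma mult_scaleR_right: "(A::real^'n^'n) ** (c *\<^sub>R B) = c *\<^sub>R (A ** B)"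
  by (simp add: matrix_matrix_mult_def vec_eq_iff sum_distrib_left mult_ac)

lemma bern_strict:
  fixes t :: real
  assumes "t > -1" "t \<noteq> 0"
  shows "(1 + t) ^ (Suc (Suc m)) > 1 + real (Suc (Suc m)) * t"
proof (induction m)
  case 0
  have "t * t > 0" by (metis assms(2) not_real_square_gt_zero)
  then show ?case by (simp add: power2_eq_square algebra_simps)
next
  case (Suc m)
  have a: "(1 + t) * (1 + t) ^ Suc (Suc m) > (1 + t) * (1 + real (Suc (Suc m)) * t)"
    using Suc assms by (intro mult_strict_left_mono) auto
  have b: "(1 + t) * (1 + real (Suc (Suc m)) * t) = 1 + real (Suc (Suc (Suc m))) * t + real (Suc (Suc m)) * t^2"
    by (simp add: algebra_simps power2_eq_square)
  have c: "real (Suc (Suc m)) * t^2 \<ge> 0" by simp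
  have "(1 + t) ^ Suc (Suc (Suc m)) = (1 + t) * (1 + t) ^ Suc (Suc m)" by simp
  then show ?case using a b c by linarith
qed

lemma amgm_strict:
  fixes x y :: real
  assumes "x \<ge> 0" "y > 0" "x \<noteq> y" "m \<ge> 1"
  shows "x * y ^ m < ((x + real m * y) / (real m + 1)) ^ (m + 1)"
proof -
  define t where "t = (x - y) / ((real m + 1) * y)"
  have pos: "(real m + 1) * y > 0" using assms by simp
  have t1: "t > -1"
  proof -
    have h: "y * real m > 0" using assms by simp
    have "(real m + 1) * y = y * real m + y" by (simp add: algebra_simps)
    then have "x - y > - ((real m + 1) * y)" using h assms(1) by linarith
    then show ?thesis unfolding t_def using pos by (simp add: field_simps)
  qed
  have t0: "t \<noteq> 0" using assms pos by (simp add: t_def)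
  obtain m' where m': "m = Suc m'" using assms by (cases m) auto
  have s: "(x + real m * y) / (real m + 1) = y * (1 + t)"
    using pos assms by (simp add: t_def field_simps)
  have "(1 + t) ^ (m + 1) > 1 + real (m + 1) * t"
    using bern_strict[OF t1 t0, of m'] m' by simp
  moreover have "1 + real (m + 1) * t = x / y"
    using assms pos by (simp add: t_def field_simps)
  ultimately have "(1 + t) ^ (m + 1) > x / y" by simp
  then have "y ^ (m + 1) * (1 + t) ^ (m + 1) > y ^ (m + 1) * (x / y)"
    using assms by (intro mult_strict_left_mono) auto
  moreover have "y ^ (m + 1) * (x / y) = x * y ^ m" using assms by (simp add: field_simps)
  ultimately have key: "y ^ (m + 1) * (1 + t) ^ (m + 1) > x * y ^ m" by linarith
  show ?thesis unfolding s power_mult_distrib using key by simp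
qed


lemma two_idx:
  assumes "CARD('n) \<ge> 2"
  obtains i j :: 'n where "i \<noteq> j"
proof -
  obtain i :: 'n where True by simp
  have "UNIV \<noteq> {i}"
  proof
    assume "UNIV = {i}"
    then have "CARD('n) = card {i}" by (rule arg_cong)
    then have "CARD('n) = 1" by simp
    then show False using assms by simp
  qed
  then obtain j where "j \<noteq> i" by auto
  then show ?thesis using that by blast
qed

lemma witness1:
  assumes n2: "CARD('n) \<ge> 2" and bpos: "\<beta> > 0" and ab: "\<alpha>^2 \<le> \<beta>"
  shows "\<exists>N::real^'n^'n. N \<in> Mset \<alpha> \<beta> \<and> det N = \<beta> powr (real CARD('n) / 2)"
proof -
  define n where "n = real CARD('n)"
  have npos: "n > 0" unfolding n_def by simp
  define v1 :: "real^'n" where "v1 = (\<chi> i. 1)"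
  define u where "u = (1 / sqrt n) *\<^sub>R v1"
  have uu: "inner u u = 1"
    using npos by (simp add: u_def v1_def inner_vec_def n_def)
  then have nu: "norm u = 1" by (simp add: norm_eq_sqrt_inner)
  obtain i j :: 'n where ij: "i \<noteq> j" using two_idx[OF n2] by blast
  define w :: "real^'n" where "w = (1 / sqrt 2) *\<^sub>R (axis i 1 - axis j 1)"
  have ww: "inner w w = 1"
    using ij by (simp add: w_def inner_diff_left inner_diff_right inner_axis_axis)
  have uw: "inner u w = 0"
    by (simp add: u_def w_def v1_def inner_diff_right inner_axis)
  define c where "c = \<alpha> / sqrt \<beta>"
  have c1: "c^2 \<le> 1" using bpos ab by (simp add: c_def power_divide)
  define s where "s = sqrt (1 - c^2)"
  have s2: "s^2 = 1 - c^2" using c1 by (simp add: s_def)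
  define bv where "bv = c *\<^sub>R u + s *\<^sub>R w"
  have "inner bv bv = c^2 + s^2"
    by (simp add: bv_def inner_add_left inner_add_right uu ww uw inner_commute[of w u] power2_eq_square)
  then have nb: "norm bv = 1" using s2 by (simp add: norm_eq_sqrt_inner)
  obtain k :: 'n where True by simp
  obtain R1 where r1: "rotation_matrix R1" and R1e: "R1 *v axis k 1 = u"
    using rotation_matrix_exists_basis[OF n2 nu] by metis
  obtain R2 where r2: "rotation_matrix R2" and R2e: "R2 *v axis k 1 = bv"
    using rotation_matrix_exists_basis[OF n2 nb] by metis
  define Q where "Q = R2 ** transpose R1"
  have R1R1: "transpose R1 ** R1 = mat 1" "det R1 = 1"
    using r1 by (auto simp: rotation_matrix_def orthogonal_matrix_def)
  have R2R2: "R2 ** transpose R2 = mat 1" "det R2 = 1"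
    using r2 by (auto simp: rotation_matrix_def orthogonal_matrix_def)
  have R1u: "transpose R1 *v u = axis k 1"
    by (metis R1e R1R1(1) matrix_vector_mul_assoc matrix_vector_mul_lid)
  have Qu: "Q *v u = bv"
    by (metis Q_def R1u R2e matrix_vector_mul_assoc)
  have dQ: "det Q = 1" by (simp add: Q_def det_mul R1R1 R2R2)
  have QQ: "Q ** transpose Q = mat 1"
  proof -
    have "Q ** transpose Q = R2 ** (transpose R1 ** R1) ** transpose R2"
      by (simp add: Q_def matrix_transpose_mul matrix_mul_assoc)
    then show ?thesis by (simp add: R1R1 R2R2)
  qed
  define N where "N = sqrt \<beta> *\<^sub>R Q"
  have sumQ: "(\<Sum>a\<in>UNIV. \<Sum>b\<in>UNIV. Q$a$b) = n * c"
  proof -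
    have "(\<Sum>a\<in>UNIV. \<Sum>b\<in>UNIV. Q$a$b) = inner v1 (Q *v v1)"
      by (simp add: inner_vec_def v1_def matrix_vector_mult_def)
    also have "v1 = sqrt n *\<^sub>R u" using npos by (simp add: u_def)
    also have "inner (sqrt n *\<^sub>R u) (Q *v (sqrt n *\<^sub>R u)) = n * inner u (Q *v u)"
      using npos by (simp add: matrix_vector_mult_scaleR)
    also have "inner u (Q *v u) = c"
      by (simp add: Qu bv_def inner_add_right uu uw)
    finally show ?thesis .
  qed
  have sqQ: "(\<Sum>a\<in>UNIV. \<Sum>b\<in>UNIV. (Q$a$b)^2) = n"
  proof -
    have "(Q ** transpose Q)$a$a = (\<Sum>b\<in>UNIV. (Q$a$b)^2)" for a
      by (simp add: matrix_matrix_mult_def transpose_def power2_eq_square)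
    then show ?thesis using QQ by (simp add: mat_def n_def)
  qed
  have "msum N = n * \<alpha>"
    using bpos by (simp add: msum_def N_def sum_distrib_left[symmetric] sumQ c_def)
  moreover have "msq N = n * \<beta>"
    using bpos by (simp add: msq_def N_def power_mult_distrib sum_distrib_left[symmetric] sqQ)
  moreover have "det N = \<beta> powr (n / 2)"
  proof -
    have "det N = sqrt \<beta> ^ CARD('n)" by (simp add: N_def det_scale dQ)
    also have "\<dots> = \<beta> powr (n / 2)"
      using bpos by (simp add: powr_half_sqrt[symmetric] powr_realpow[symmetric] powr_powr n_def)
    finally show ?thesis .
  qed
  ultimately show ?thesis unfolding Mset_def n_def by blast
qed


lemma sum_if_eq: "(\<Sum>j\<in>(UNIV::'n::finite set). if i = j then A else B) = A + (real CARD('n) - 1) * (B::real)"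
proof -
  have "(\<Sum>j\<in>(UNIV::'n set). if i = j then A else B) = A + (\<Sum>j\<in>UNIV-{i}. if i = j then A else B)"
    using sum.remove[of UNIV i "\<lambda>j. if i = j then A else B"] unfolding if_P[OF refl] by simp
  also have "(\<Sum>j\<in>UNIV-{i}. if i = j then A else B) = (\<Sum>j\<in>UNIV-{i}. B)"
    by (rule sum.cong) auto
  also have "\<dots> = (real CARD('n) - 1) * B"
  proof -
    have "CARD('n) > 0" by simp
    then show ?thesis by (simp add: card_Diff_singleton of_nat_diff)
  qed
  finally show ?thesis .
qed

lemma sum_perm: "p permutes (UNIV::'n::finite set) \<Longrightarrow> (\<Sum>k\<in>UNIV. f (p k)) = (\<Sum>k\<in>(UNIV::'n set). (f k::real))"
  by (metis permutes_imp_bij sum.reindex_bij_betw)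

lemma witness2:
  assumes n2: "CARD('n) \<ge> 2" and bpos: "\<beta> > 0" and ab: "\<beta> < \<alpha>^2" and ab2: "\<alpha>^2 < real CARD('n) * \<beta>"
  shows "\<exists>N::real^'n^'n. N \<in> Mset \<alpha> \<beta> \<and> det N > 0"
proof -
  define n where "n = real CARD('n)"
  have n2': "n \<ge> 2" using n2 unfolding n_def by simp
  define P where "P = (n * \<beta> - \<alpha>^2) / (n - 1)"
  have Ppos: "P > 0" using ab2 n2' by (simp add: P_def n_def)
  define p where "p = sqrt P"
  have ppos: "p > 0" using Ppos by (simp add: p_def)
  have p2: "p^2 = P" using Ppos by (simp add: p_def)
  define q where "q = (\<alpha> - p) / n"
  define N0 :: "real^'n^'n" where "N0 = p *\<^sub>R mat 1 + q *\<^sub>R onesJ"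
  have Ne: "N0$i$j = (if i = j then p + q else q)" for i j
    by (simp add: N0_def mat_def onesJ_def)
  have pq: "p + n * q = \<alpha>" using n2' by (simp add: q_def)
  have dN0: "det N0 = p^(CARD('n)-1) * \<alpha>"
    using det_IJ[OF n2, of p q] pq by (simp add: N0_def n_def)
  have sN0: "msum N0 = n * \<alpha>"
    by (simp add: msum_def Ne sum_if_eq n_def[symmetric]) (use pq in \<open>simp add: algebra_simps\<close>)
  have qN0: "msq N0 = n * \<beta>"
  proof -
    have "msq N0 = n * ((p + q)^2 + (n - 1) * q^2)"
      by (simp add: msq_def Ne if_distrib[of "\<lambda>x. x^2"] sum_if_eq n_def[symmetric] cong: if_cong)
    also have "\<dots> = n * \<beta>"
    proof -
      have "(p + q)^2 + (n - 1) * q^2 = p^2 + (p + n*q)^2/n - p^2/n"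
        using n2' by (simp add: field_simps power2_eq_square)
      also have "\<dots> = P * (n - 1) / n + \<alpha>^2 / n"
        using n2' by (simp add: pq p2 field_simps)
      also have "P * (n - 1) = n * \<beta> - \<alpha>^2" using n2' by (simp add: P_def)
      also have "(n * \<beta> - \<alpha>^2) / n + \<alpha>^2 / n = \<beta>"
        using n2' by (simp add: field_simps)
      finally show ?thesis by simp
    qed
    finally show ?thesis .
  qed
  have a0: "\<alpha> \<noteq> 0" using ab bpos by auto
  show ?thesis
  proof (cases "\<alpha> > 0")
    case True
    then show ?thesis using sN0 qN0 dN0 ppos unfolding Mset_def n_def by (intro exI[of _ N0]) auto
  next
    case False
    then have aneg: "\<alpha> < 0" using a0 by simp
    obtain i j :: 'n where ij: "i \<noteq> j" using two_idx[OF n2] by blast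
    define t where "t = Transposition.transpose i j"
    have tp: "t permutes UNIV" unfolding t_def by (rule permutes_swap_id) auto
    define N1 :: "real^'n^'n" where "N1 = (\<chi> k. N0 $ t k)"
    have "det N1 = - det N0"
      unfolding N1_def using det_permute_rows[OF tp, of N0] ij by (simp add: t_def sign_swap_id)
    then have "det N1 > 0" using dN0 aneg ppos by (simp add: mult_pos_neg)
    moreover have "msum N1 = msum N0"
      unfolding msum_def N1_def using sum_perm[OF tp, of "\<lambda>k. \<Sum>j\<in>UNIV. N0$k$j"] by simp
    moreover have "msq N1 = msq N0"
      unfolding msq_def N1_def using sum_perm[OF tp, of "\<lambda>k. \<Sum>j\<in>UNIV. (N0$k$j)^2"] by simp
    ultimately show ?thesis using sN0 qN0 unfolding Mset_def n_def by (intro exI[of _ N1]) auto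
  qed
qed


lemma sq_unique: "(x::real) \<ge> 0 \<Longrightarrow> y \<ge> 0 \<Longrightarrow> x^2 = y^2 \<Longrightarrow> x = y"
  using power2_eq_imp_eq by blast

lemma powr_sq: "(x::real) > 0 \<Longrightarrow> (x powr a)^2 = x powr (2 * a)"
  by (simp add: power2_eq_square powr_add[symmetric])

theorem mainTheorem4:
  fixes M :: "real^'n^'n" and \<alpha> \<beta> :: real
  assumes n2: "CARD('n) \<ge> 2"
    and \<beta>pos: "\<beta> > 0"
    and \<alpha>\<beta>: "\<alpha>^2 < real CARD('n) * \<beta>"
    and Min: "M \<in> Mset \<alpha> \<beta>"
    and Mmax: "\<forall>N::real^'n^'n \<in> Mset \<alpha> \<beta>. det N \<le> det M"
  shows "(\<alpha>^2 \<le> \<beta> \<longrightarrow>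
            M ** transpose M = \<beta> *\<^sub>R mat 1
          \<and> det M = \<beta> powr (real CARD('n) / 2))
       \<and> (\<alpha>^2 \<ge> \<beta> \<longrightarrow>
          (let \<delta> = (\<alpha>^2 - \<beta>) / (real CARD('n) - 1) in
            (\<forall>i. (\<Sum>j\<in>UNIV. M $ i $ j) = \<alpha>)
          \<and> (\<forall>j. (\<Sum>i\<in>UNIV. M $ i $ j) = \<alpha>)
          \<and> M ** transpose M = (\<beta> - \<delta>) *\<^sub>R mat 1 + \<delta> *\<^sub>R onesJ
          \<and> det M = \<bar>\<alpha>\<bar> * (\<beta> - \<delta>) powr ((real CARD('n) - 1) / 2)))"
proof -
  define n where "n = real CARD('n)"
  have n2': "n \<ge> 2" using n2 unfolding n_def by simp
  define D where "D = det M"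
  define \<delta> where "\<delta> = (\<alpha>^2 - \<beta>) / (n - 1)"
  have sM: "msum M = n * \<alpha>" and qM: "msq M = n * \<beta>"
    using Min by (auto simp: Mset_def n_def)
  have Dpos: "D > 0"
  proof (cases "\<alpha>^2 \<le> \<beta>")
    case True
    then obtain N :: "real^'n^'n" where "N \<in> Mset \<alpha> \<beta>" "det N = \<beta> powr (real CARD('n) / 2)"
      using witness1[OF n2 \<beta>pos] by blast
    moreover have "\<beta> powr (real CARD('n) / 2) > 0" using \<beta>pos by simp
    ultimately show ?thesis using Mmax unfolding D_def by (metis order_less_le_trans)
  next
    case False
    then obtain N :: "real^'n^'n" where "N \<in> Mset \<alpha> \<beta>" "det N > 0"
      using witness2[OF n2 \<beta>pos _ \<alpha>\<beta>] by fastforce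
    then show ?thesis using Mmax unfolding D_def by force
  qed
  obtain a b where Cf: "cofm M = a *\<^sub>R onesJ + b *\<^sub>R M"
    using cof_comb[OF \<alpha>\<beta> Min Mmax] by blast
  define rs where "rs i = (\<Sum>j\<in>UNIV. M $ i $ j)" for i
  define cs where "cs j = (\<Sum>i\<in>UNIV. M $ i $ j)" for j
  define G where "G = M ** transpose M"
  define H where "H = transpose M ** M"
  have Ge: "G$i$k = (\<Sum>j\<in>UNIV. M$i$j * M$k$j)" for i k
    by (simp add: G_def matrix_matrix_mult_def transpose_def)
  have He: "H$i$k = (\<Sum>j\<in>UNIV. M$j$i * M$j$k)" for i k
    by (simp add: H_def matrix_matrix_mult_def transpose_def)
  have E1: "a * rs k + b * G$i$k = (if i = k then D else 0)" for i k
  proof -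
    have "(cofm M ** transpose M)$i$k = a * rs k + b * G$i$k"
      by (simp add: Cf Ge rs_def matrix_matrix_mult_def transpose_def onesJ_def
          distrib_right sum.distrib sum_distrib_left mult.assoc)
    moreover have "(cofm M ** transpose M)$i$k = (if i = k then D else 0)"
      by (simp add: cofm_mul D_def mat_def)
    ultimately show ?thesis by simp
  qed
  have E2': "transpose M ** cofm M = D *\<^sub>R mat 1"
  proof -
    have "cofm M ** ((1/D) *\<^sub>R transpose M) = mat 1"
      using Dpos by (simp add: mult_scaleR_right cofm_mul D_def)
    then have "((1/D) *\<^sub>R transpose M) ** cofm M = mat 1"
      using matrix_left_right_inverse by blast
    then have "(1/D) *\<^sub>R (transpose M ** cofm M) = mat 1" by (simp add: mult_scaleR_left)
    then have "D *\<^sub>R ((1/D) *\<^sub>R (transpose M ** cofm M)) = D *\<^sub>R mat 1" by simp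
    then show ?thesis using Dpos by simp
  qed
  have E2: "a * cs i + b * H$i$k = (if i = k then D else 0)" for i k
  proof -
    have "(transpose M ** cofm M)$i$k = a * cs i + b * H$i$k"
      by (simp add: Cf He cs_def matrix_matrix_mult_def transpose_def onesJ_def
          distrib_left sum.distrib sum_distrib_left sum_distrib_right mult.assoc mult.left_commute)
        (simp add: mult.commute)
    moreover have "(transpose M ** cofm M)$i$k = (if i = k then D else 0)"
      by (simp add: E2' mat_def)
    ultimately show ?thesis by simp
  qed
  have Gsym: "G$i$k = G$k$i" for i k by (simp add: Ge mult.commute)
  have Hsym: "H$i$k = H$k$i" for i k by (simp add: He mult.commute)
  have trG: "(\<Sum>i\<in>UNIV. G$i$i) = n * \<beta>"
    using qM by (simp add: Ge msq_def power2_eq_square)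
  have trH: "(\<Sum>i\<in>UNIV. H$i$i) = n * \<beta>"
    using qM unfolding msq_def by (simp add: He power2_eq_square) (subst sum.swap, simp)
  have totG: "(\<Sum>i\<in>UNIV. \<Sum>k\<in>UNIV. G$i$k) = (\<Sum>j\<in>UNIV. (cs j)^2)"
  proof -
    have "(\<Sum>j\<in>UNIV. (cs j)^2) = (\<Sum>j\<in>UNIV. \<Sum>i\<in>UNIV. \<Sum>k\<in>UNIV. M$i$j * M$k$j)"
      by (simp add: cs_def power2_eq_square sum_product)
    also have "\<dots> = (\<Sum>i\<in>UNIV. \<Sum>j\<in>UNIV. \<Sum>k\<in>UNIV. M$i$j * M$k$j)"
      by (rule sum.swap)
    also have "\<dots> = (\<Sum>i\<in>UNIV. \<Sum>k\<in>UNIV. \<Sum>j\<in>UNIV. M$i$j * M$k$j)"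
      by (rule sum.cong[OF refl], rule sum.swap)
    finally show ?thesis by (simp add: Ge)
  qed
  have totH: "(\<Sum>i\<in>UNIV. \<Sum>k\<in>UNIV. H$i$k) = (\<Sum>j\<in>UNIV. (rs j)^2)"
  proof -
    have "(\<Sum>j\<in>UNIV. (rs j)^2) = (\<Sum>j\<in>UNIV. \<Sum>i\<in>UNIV. \<Sum>k\<in>UNIV. M$j$i * M$j$k)"
      by (simp add: rs_def power2_eq_square sum_product)
    also have "\<dots> = (\<Sum>i\<in>UNIV. \<Sum>j\<in>UNIV. \<Sum>k\<in>UNIV. M$j$i * M$j$k)"
      by (rule sum.swap)
    also have "\<dots> = (\<Sum>i\<in>UNIV. \<Sum>k\<in>UNIV. \<Sum>j\<in>UNIV. M$j$i * M$j$k)"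
      by (rule sum.cong[OF refl], rule sum.swap)
    finally show ?thesis by (simp add: He)
  qed
  have srs: "(\<Sum>i\<in>UNIV. rs i) = n * \<alpha>" using sM by (simp add: rs_def msum_def)
  have scs: "(\<Sum>j\<in>UNIV. cs j) = n * \<alpha>" using sM unfolding cs_def msum_def by (subst sum.swap) simp
  obtain i0 k0 :: 'n where ik0: "i0 \<noteq> k0" using two_idx[OF n2] by blast
  have b0: "b \<noteq> 0"
  proof
    assume "b = 0"
    then have "a * rs k0 = D" "a * rs k0 = 0" using E1[where i=k0 and k=k0] E1[where i=i0 and k=k0] ik0 by auto
    then show False using Dpos by simp
  qed
  have detG: "det G = D^2" by (simp add: G_def det_mul D_def power2_eq_square)
  have devsum: "(\<Sum>j\<in>UNIV. (f j - \<alpha>)^2) = (\<Sum>j\<in>UNIV. (f j)^2) - n * \<alpha>^2"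
    if "(\<Sum>j\<in>UNIV. f j) = n * \<alpha>" for f :: "'n \<Rightarrow> real"
  proof -
    have "(\<Sum>j\<in>UNIV. (f j - \<alpha>)^2) = (\<Sum>j\<in>UNIV. (f j)^2) - 2 * \<alpha> * (\<Sum>j\<in>UNIV. f j) + n * \<alpha>^2"
      by (simp add: power2_diff sum.distrib sum_subtractf sum_distrib_left[symmetric] sum_distrib_right[symmetric] n_def mult_ac)
    then show ?thesis using that by (simp add: power2_eq_square)
  qed
  have main: "(G = \<beta> *\<^sub>R mat 1 \<and> H = \<beta> *\<^sub>R mat 1 \<and> \<alpha>^2 \<le> \<beta>) \<or>
      ((\<forall>i. rs i = \<alpha>) \<and> (\<forall>j. cs j = \<alpha>) \<and> G = (\<beta> - \<delta>) *\<^sub>R mat 1 + \<delta> *\<^sub>R onesJ)"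
  proof (cases "a = 0")
    case True
    have Gd: "G$i$k = (if i = k then D / b else 0)" for i k
      using E1[where i=i and k=k] True b0 by (auto simp: field_simps)
    have Hd: "H$i$k = (if i = k then D / b else 0)" for i k
      using E2[of i k] True b0 by (auto simp: field_simps)
    have "n * (D / b) = n * \<beta>" using trG by (simp add: Gd n_def)
    then have Db: "D / b = \<beta>" using n2' by (metis mult_cancel_left not_numeral_le_zero)
    have GI: "G = \<beta> *\<^sub>R mat 1" by (simp add: vec_eq_iff Gd Db mat_def)
    have HI: "H = \<beta> *\<^sub>R mat 1" by (simp add: vec_eq_iff Hd Db mat_def)
    have "(\<Sum>i\<in>UNIV. \<Sum>k\<in>UNIV. G$i$k) = n * \<beta>"
      by (simp add: GI mat_def n_def if_distrib[of "(*) \<beta>"] sum_if_eq cong: if_cong)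
    then have "(\<Sum>j\<in>UNIV. (cs j - \<alpha>)^2) = n * \<beta> - n * \<alpha>^2"
      using devsum[OF scs] totG by simp
    moreover have "(\<Sum>j\<in>UNIV. (cs j - \<alpha>)^2) \<ge> 0" by (simp add: sum_nonneg)
    ultimately have "n * \<beta> - n * \<alpha>^2 \<ge> 0" by linarith
    then have "n * (\<beta> - \<alpha>^2) \<ge> 0" by (simp only: right_diff_distrib)
    then have "\<beta> - \<alpha>^2 \<ge> 0" using n2' by (simp add: zero_le_mult_iff)
    then have "\<alpha>^2 \<le> \<beta>" by simp
    then show ?thesis using GI HI by blast
  next
    case False
    have rsc: "rs i = rs k" for i k
    proof (cases "i = k")
      case False
      have e1: "a * rs k + b * G$k$i = 0" using E1[where i=i and k=k] Gsym[of i k] False by simp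
      have e2: "a * rs i + b * G$k$i = 0" using E1[where i=k and k=i] False by simp
      have "a * rs k = a * rs i" using e1 e2 by linarith
      then show ?thesis using \<open>a \<noteq> 0\<close> by simp
    qed simp
    have csc: "cs i = cs k" for i k
    proof (cases "i = k")
      case False
      have e1: "a * cs i + b * H$k$i = 0" using E2[of i k] Hsym[of i k] False by simp
      have e2: "a * cs k + b * H$k$i = 0" using E2[of k i] False by simp
      have "a * cs k = a * cs i" using e1 e2 by linarith
      then show ?thesis using \<open>a \<noteq> 0\<close> by simp
    qed simp
    have rsa: "rs i = \<alpha>" for i
    proof -
      have "(\<Sum>k\<in>UNIV. rs k) = (\<Sum>k\<in>(UNIV::'n set). rs i)" using rsc by (intro sum.cong) auto
      then have "(\<Sum>k\<in>UNIV. rs k) = n * rs i" by (simp add: n_def)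
      then show ?thesis using srs n2' by simp
    qed
    have csa: "cs i = \<alpha>" for i
    proof -
      have "(\<Sum>k\<in>UNIV. cs k) = (\<Sum>k\<in>(UNIV::'n set). cs i)" using csc by (intro sum.cong) auto
      then have "(\<Sum>k\<in>UNIV. cs k) = n * cs i" by (simp add: n_def)
      then show ?thesis using scs n2' by simp
    qed
    define P where "P = D / b"
    define Q where "Q = - a * \<alpha> / b"
    have Gd: "G$i$k = (if i = k then P + Q else Q)" for i k
      using E1[where i=i and k=k] b0 rsa[of k] by (auto simp: P_def Q_def field_simps)
    have "(\<Sum>i\<in>UNIV. G$i$i) = n * (P + Q)" by (simp add: Gd n_def)
    then have PQ1: "P + Q = \<beta>" using trG n2' by simp
    have "(\<Sum>i\<in>UNIV. \<Sum>k\<in>UNIV. G$i$k) = n * (P + Q + (n - 1) * Q)"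
      by (simp add: Gd sum_if_eq n_def)
    moreover have "(\<Sum>j\<in>UNIV. (cs j)^2) = n * \<alpha>^2" by (simp add: csa n_def)
    ultimately have PQ2: "P + Q + (n - 1) * Q = \<alpha>^2" using totG n2' by simp
    have Qd: "Q = \<delta>" using PQ1 PQ2 n2' by (simp add: \<delta>_def field_simps)
    have Pd: "P = \<beta> - \<delta>" using PQ1 Qd by simp
    have "G = (\<beta> - \<delta>) *\<^sub>R mat 1 + \<delta> *\<^sub>R onesJ"
      by (simp add: vec_eq_iff Gd Pd Qd mat_def onesJ_def)
    then show ?thesis using rsa csa by blast
  qed
  have nC: "real (CARD('n) - 1) = n - 1" using n2 by (simp add: n_def of_nat_diff)
  have bd: "\<beta> - \<delta> > 0"
  proof -
    have "\<beta> - \<delta> = (n * \<beta> - \<alpha>^2) / (n - 1)" using n2' by (simp add: \<delta>_def field_simps)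
    then show ?thesis using \<alpha>\<beta> n2' by (simp add: n_def)
  qed
  have Dpow: "D = \<beta> powr (n/2)" if GI: "G = \<beta> *\<^sub>R mat 1"
  proof -
    have "D^2 = \<beta>^CARD('n)" using detG GI by (simp add: det_scale)
    moreover have "(\<beta> powr (n/2))^2 = \<beta>^CARD('n)"
      using \<beta>pos by (simp add: powr_sq n_def powr_realpow)
    moreover have "\<beta> powr (n/2) \<ge> 0" by simp
    ultimately show ?thesis using sq_unique[of D] Dpos by simp
  qed
  have DJ: "D^2 = (\<beta> - \<delta>)^(CARD('n)-1) * \<alpha>^2" if GJ: "G = (\<beta> - \<delta>) *\<^sub>R mat 1 + \<delta> *\<^sub>R onesJ"
  proof -
    have "D^2 = (\<beta> - \<delta>)^(CARD('n)-1) * ((\<beta> - \<delta>) + n * \<delta>)"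
      using detG GJ det_IJ[OF n2] by (simp add: n_def)
    moreover have "(\<beta> - \<delta>) + n * \<delta> = \<alpha>^2"
    proof -
      have "n - 1 \<noteq> 0" using n2' by simp
      then have "(n - 1) * \<delta> = \<alpha>^2 - \<beta>" by (simp add: \<delta>_def)
      then show ?thesis by (simp add: algebra_simps)
    qed
    ultimately show ?thesis by simp
  qed
  have part1: "\<alpha>^2 \<le> \<beta> \<Longrightarrow> G = \<beta> *\<^sub>R mat 1"
  proof -
    assume ab1: "\<alpha>^2 \<le> \<beta>"
    show "G = \<beta> *\<^sub>R mat 1"
    proof (cases "G = \<beta> *\<^sub>R mat 1 \<and> H = \<beta> *\<^sub>R mat 1 \<and> \<alpha>^2 \<le> \<beta>")
      case True then show ?thesis by blast
    next
      case False
      then have GJ: "G = (\<beta> - \<delta>) *\<^sub>R mat 1 + \<delta> *\<^sub>R onesJ" using main by blast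
      have eq: "\<alpha>^2 = \<beta>"
      proof (rule ccontr)
        assume "\<alpha>^2 \<noteq> \<beta>"
        then have lt: "\<alpha>^2 < \<beta>" using ab1 by simp
        then have "\<delta> < 0" using n2' by (simp add: \<delta>_def divide_neg_pos)
        then have ne: "\<alpha>^2 \<noteq> \<beta> - \<delta>" using lt by simp
        have m1: "CARD('n) - 1 \<ge> 1" using n2 by simp
        have "\<alpha>^2 * (\<beta> - \<delta>)^(CARD('n)-1) < ((\<alpha>^2 + real (CARD('n)-1) * (\<beta> - \<delta>)) / (real (CARD('n)-1) + 1)) ^ (CARD('n)-1+1)"
          by (rule amgm_strict[OF _ bd ne m1]) simp
        also have "(\<alpha>^2 + real (CARD('n)-1) * (\<beta> - \<delta>)) / (real (CARD('n)-1) + 1) = \<beta>"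
          using n2' unfolding nC by (simp add: \<delta>_def field_simps)
        also have "CARD('n)-1+1 = CARD('n)" using n2 by simp
        finally have lt2: "D^2 < \<beta>^CARD('n)" using DJ[OF GJ] by (simp add: mult.commute)
        obtain N :: "real^'n^'n" where "N \<in> Mset \<alpha> \<beta>" "det N = \<beta> powr (real CARD('n) / 2)"
          using witness1[OF n2 \<beta>pos ab1] by blast
        then have le: "\<beta> powr (n / 2) \<le> D" using Mmax unfolding D_def n_def by metis
        have "(\<beta> powr (n/2))^2 \<le> D^2" using le by (intro power_mono) auto
        moreover have "(\<beta> powr (n/2))^2 = \<beta>^CARD('n)"
          using \<beta>pos by (simp add: powr_sq n_def powr_realpow)
        ultimately show False using lt2 by simp
      qed
      then have "\<delta> = 0" by (simp add: \<delta>_def)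
      then show ?thesis using GJ by simp
    qed
  qed
  have part2: "(\<forall>i. rs i = \<alpha>) \<and> (\<forall>j. cs j = \<alpha>) \<and> G = (\<beta> - \<delta>) *\<^sub>R mat 1 + \<delta> *\<^sub>R onesJ
      \<and> D = \<bar>\<alpha>\<bar> * (\<beta> - \<delta>) powr ((n - 1) / 2)" if ab2: "\<alpha>^2 \<ge> \<beta>"
  proof (cases "G = \<beta> *\<^sub>R mat 1 \<and> H = \<beta> *\<^sub>R mat 1 \<and> \<alpha>^2 \<le> \<beta>")
    case True
    then have GI: "G = \<beta> *\<^sub>R mat 1" and HI: "H = \<beta> *\<^sub>R mat 1" and eq: "\<alpha>^2 = \<beta>"
      using ab2 by auto
    have d0: "\<delta> = 0" using eq by (simp add: \<delta>_def)
    have sumI: "(\<Sum>i\<in>UNIV. \<Sum>k\<in>UNIV. (\<beta> *\<^sub>R mat 1 :: real^'n^'n)$i$k) = n * \<beta>"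
      by (simp add: mat_def n_def if_distrib[of "(*) \<beta>"] sum_if_eq cong: if_cong)
    have "(\<Sum>j\<in>UNIV. (cs j - \<alpha>)^2) = 0"
      using devsum[OF scs] totG sumI GI eq by simp
    then have csa: "\<forall>j. cs j = \<alpha>" by (simp add: sum_nonneg_eq_0_iff)
    have "(\<Sum>j\<in>UNIV. (rs j - \<alpha>)^2) = 0"
      using devsum[OF srs] totH sumI HI eq by simp
    then have rsa: "\<forall>j. rs j = \<alpha>" by (simp add: sum_nonneg_eq_0_iff)
    have "D = \<beta> powr (n/2)" by (rule Dpow[OF GI])
    also have "\<dots> = \<beta> powr (1/2) * \<beta> powr ((n - 1)/2)"
      by (simp add: powr_add[symmetric] diff_divide_distrib)
    also have "\<beta> powr (1/2) = \<bar>\<alpha>\<bar>"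
      using \<beta>pos eq by (simp add: powr_half_sqrt real_sqrt_abs[symmetric])
    finally have "D = \<bar>\<alpha>\<bar> * (\<beta> - \<delta>) powr ((n - 1) / 2)" by (simp add: d0)
    then show ?thesis using csa rsa GI d0 by simp
  next
    case False
    then have R: "(\<forall>i. rs i = \<alpha>) \<and> (\<forall>j. cs j = \<alpha>) \<and> G = (\<beta> - \<delta>) *\<^sub>R mat 1 + \<delta> *\<^sub>R onesJ"
      using main by blast
    have "D^2 = (\<beta> - \<delta>)^(CARD('n)-1) * \<alpha>^2" using DJ R by blast
    moreover have "(\<bar>\<alpha>\<bar> * (\<beta> - \<delta>) powr ((n - 1) / 2))^2 = (\<beta> - \<delta>)^(CARD('n)-1) * \<alpha>^2"
    proof -
      have h0: "((\<beta> - \<delta>) powr ((n - 1) / 2))^2 = (\<beta> - \<delta>) powr (2 * ((n - 1) / 2))"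
        using bd by (rule powr_sq)
      have e2: "2 * ((n - 1) / 2) = real (CARD('n) - 1)" using nC by simp
      have h: "((\<beta> - \<delta>) powr ((n - 1) / 2))^2 = (\<beta> - \<delta>)^(CARD('n)-1)"
        using h0 powr_realpow[OF bd, of "CARD('n) - 1"] unfolding e2 by simp
      have "(\<bar>\<alpha>\<bar> * (\<beta> - \<delta>) powr ((n - 1) / 2))^2 = \<bar>\<alpha>\<bar>^2 * ((\<beta> - \<delta>) powr ((n - 1) / 2))^2"
        by (rule power_mult_distrib)
      then show ?thesis by (simp only: h power2_abs mult.commute)
    qed
    moreover have "\<bar>\<alpha>\<bar> * (\<beta> - \<delta>) powr ((n - 1) / 2) \<ge> 0" by simp
    ultimately have "D = \<bar>\<alpha>\<bar> * (\<beta> - \<delta>) powr ((n - 1) / 2)"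
      using sq_unique[of D] Dpos by simp
    then show ?thesis using R by blast
  qed
  show ?thesis
    unfolding Let_def n_def[symmetric] \<delta>_def[symmetric]
    using part1 part2 Dpow unfolding G_def[symmetric] D_def[symmetric] rs_def[symmetric] cs_def[symmetric]
    by (auto simp: n_def)
qed

end
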